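(* Let $k_{\max}=k_{\max}(x)$ be a positive-integer-valued function with $\log k_{\max}(x)/\log x\to0$. Choose $m$ uniformly at random from $\{1,\dots,x\}$. For a positive integer $k$ and a prime $p$ let $A_k^p$ be the event that every $f\in[f_{m-k,m}]$ whose tuple satisfies $p\nmid a_0a_k$ is irreducible over $\mathbb{Q}$. Then \[ \lim_{x\to\infty}\mathbb{P}\Big(\bigcup_{p>k_{\max}}\ \bigcap_{k=1}^{k_{\max}}A_k^p\Big)=1, \] where the union is over primes $p>k_{\max}$.
   Context: For integers $0\le n<m$, $f_{n,m}(x)=\sum_{j=n}^{m}\frac{x^{j-n}}{j!}$. For a polynomial $f=\sum_{j=0}^{k}b_jx^j$ with $b_0b_k\ne0$ define $[f]=\{\sum_{j=0}^k a_jb_jx^j:\ a_j\in\mathbb{Z},\ a_0a_k\neq0\}$; each element of $[f]$ comes with its tuple $(a_0,\dots,a_k)$. Events involving $f_{m-k,m}$ are understood to include the requirement $m-k\ge0$. *)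

theory Defs
  imports Complex_Main "HOL-Computational_Algebra.Polynomial_Factorial"
begin

definition f_poly :: "nat \<Rightarrow> nat \<Rightarrow> rat poly" where
  "f_poly n m = (\<Sum>j=n..m. monom (1 / fact j) (j - n))"

text \<open>The element of [f] attached to the integer tuple a = (a_0,...,a_k), k = degree f.\<close>
definition bracket_elem :: "rat poly \<Rightarrow> (nat \<Rightarrow> int) \<Rightarrow> rat poly" where
  "bracket_elem f a = (\<Sum>j\<le>degree f. monom (of_int (a j) * coeff f j) j)"

definition event_A :: "nat \<Rightarrow> nat \<Rightarrow> nat \<Rightarrow> bool" where
  "event_A k p m \<longleftrightarrow> k \<le> m \<and>
     (\<forall>a :: nat \<Rightarrow> int.
        a 0 * a (degree (f_poly (m - k) m)) \<noteq> 0 \<longrightarrow>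
        \<not> (int p dvd a 0 * a (degree (f_poly (m - k) m))) \<longrightarrow>
        irreducible (bracket_elem (f_poly (m - k) m) a))"

end

theory Submission
  imports Defs "Berlekamp_Zassenhaus.Factor_Bound" "HOL-Number_Theory.Prime_Powers" "HOL-Real_Asymp.Real_Asymp"
begin


hide_const (open) UnivPoly.coeff UnivPoly.monom Module.module.smult

lemma coeff_f_poly: assumes "n \<le> m" shows "coeff (f_poly n m) i = (if i \<le> m - n then 1 / fact (n+i) else 0)"
proof -
  have "coeff (f_poly n m) i = (\<Sum>j=n..m. if j = n + i then 1 / fact j else 0)"
    unfolding f_poly_def coeff_sum coeff_monom
    by (intro sum.cong) auto
  also have "\<dots> = (if i \<le> m - n then 1 / fact (n+i) else 0)"
    using assms by (subst sum.delta) auto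
  finally show ?thesis .
qed

lemma degree_f_poly: assumes "n \<le> m" shows "degree (f_poly n m) = m - n"
proof (rule antisym)
  show "degree (f_poly n m) \<le> m - n"
    by (rule degree_le) (auto simp: coeff_f_poly assms)
  show "m - n \<le> degree (f_poly n m)"
    by (rule le_degree) (simp add: coeff_f_poly assms)
qed

lemma coeff_bracket: "coeff (bracket_elem f a) i = (if i \<le> degree f then of_int (a i) * coeff f i else 0)"
  unfolding bracket_elem_def coeff_sum coeff_monom
  by (subst sum.delta) auto

lemma eis_aux:
  fixes H R S :: "int poly"
  assumes p: "prime p" and HRS: "H = R * S" and lead: "\<not> p dvd lead_coeff H"
    and low: "\<forall>i<degree H. p dvd coeff H i" and r0: "p dvd coeff R 0" and s0: "\<not> p dvd coeff S 0"
  shows "degree S = 0"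
proof -
  have H0: "H \<noteq> 0" using lead by auto
  hence R0: "R \<noteq> 0" and S0: "S \<noteq> 0" using HRS by auto
  have dH: "degree H = degree R + degree S" using HRS R0 S0 degree_mult_eq by blast
  have "lead_coeff H = lead_coeff R * lead_coeff S" using HRS lead_coeff_mult by blast
  hence lR: "\<not> p dvd lead_coeff R" using lead by auto
  define i0 where "i0 = (LEAST i. \<not> p dvd coeff R i)"
  have ex: "\<not> p dvd coeff R (degree R)" using lR by simp
  have i0: "\<not> p dvd coeff R i0" unfolding i0_def by (rule LeastI[of _ "degree R"]) (rule ex)
  have i0le: "i0 \<le> degree R" unfolding i0_def by (rule Least_le) (rule ex)
  have below: "\<And>j. j < i0 \<Longrightarrow> p dvd coeff R j" unfolding i0_def using not_less_Least by blast
  have "coeff H i0 = (\<Sum>j\<le>i0. coeff R j * coeff S (i0 - j))" using HRS coeff_mult by blast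
  also have "\<dots> = (\<Sum>j<i0. coeff R j * coeff S (i0 - j)) + coeff R i0 * coeff S 0"
    by (simp add: lessThan_Suc_atMost[symmetric])
  finally have ci0: "coeff H i0 = (\<Sum>j<i0. coeff R j * coeff S (i0 - j)) + coeff R i0 * coeff S 0" .
  have d1: "p dvd (\<Sum>j<i0. coeff R j * coeff S (i0 - j))"
    by (rule dvd_sum) (use below in auto)
  have d2: "\<not> p dvd coeff R i0 * coeff S 0" using i0 s0 p prime_dvd_mult_iff by blast
  have "\<not> p dvd coeff H i0" using d1 d2 ci0 by (metis dvd_add_right_iff)
  hence "\<not> i0 < degree H" using low by auto
  thus ?thesis using dH i0le by linarith
qed

lemma eisenstein:
  fixes H R S :: "int poly"
  assumes p: "prime p" and HRS: "H = R * S" and lead: "\<not> p dvd lead_coeff H"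
    and low: "\<forall>i<degree H. p dvd coeff H i" and c0: "\<not> p^2 dvd coeff H 0"
  shows "degree R = 0 \<or> degree S = 0"
proof (cases "degree H = 0")
  case True
  have H0: "H \<noteq> 0" using lead by auto
  hence "R \<noteq> 0" "S \<noteq> 0" using HRS by auto
  then show ?thesis using True HRS degree_mult_eq by (metis add_is_0)
next
  case False
  hence "p dvd coeff H 0" using low by auto
  moreover have hc: "coeff H 0 = coeff R 0 * coeff S 0" using HRS by (simp add: coeff_mult)
  ultimately have "p dvd coeff R 0 \<or> p dvd coeff S 0" using p prime_dvd_mult_iff by metis
  moreover have "\<not> (p dvd coeff R 0 \<and> p dvd coeff S 0)"
  proof
    assume "p dvd coeff R 0 \<and> p dvd coeff S 0"
    hence "p * p dvd coeff R 0 * coeff S 0" by (auto intro: mult_dvd_mono)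
    thus False using c0 hc by (simp add: power2_eq_square)
  qed
  ultimately show ?thesis
    using eis_aux[OF p HRS lead low] eis_aux[OF p _ _ _, of H S R] HRS lead low
    by (metis mult.commute)
qed

lemma fact_split_rat: assumes "j \<le> m" shows "(fact m :: rat) = fact j * of_nat (\<Prod>{j+1..m})"
proof -
  have "(fact m::nat) = fact j * \<Prod>{j+1..m}"
    using fact_div_fact[OF assms] fact_dvd[OF assms] by (metis dvd_mult_div_cancel)
  hence "(of_nat (fact m) :: rat) = of_nat (fact j * \<Prod>{j+1..m})" by simp
  thus ?thesis by (simp add: of_nat_fact)
qed

lemma event_A_of:
  assumes p: "prime p" and pm: "p dvd m" and sq: "\<not> p^2 dvd m" and k1: "1 \<le> k" and kp: "k < p"
  shows "event_A k p m"
proof -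
  have m0: "m \<noteq> 0" using sq by (metis dvd_0_right)
  have "p \<le> m" using pm m0 by (simp add: dvd_imp_le)
  hence km: "k \<le> m" using kp by linarith
  define n where "n = m - k"
  have nm: "n \<le> m" and nk: "n + k = m" using km by (auto simp: n_def)
  define f where "f = f_poly n m"
  have df: "degree f = k" unfolding f_def using degree_f_poly[OF nm] nk by simp
  have cf: "\<And>i. coeff f i = (if i \<le> k then 1 / fact (n+i) else 0)"
    unfolding f_def using coeff_f_poly[OF nm] nk by (metis add_diff_cancel_left')
  have "\<forall>a :: nat \<Rightarrow> int. a 0 * a k \<noteq> 0 \<longrightarrow> \<not> (int p dvd a 0 * a k) \<longrightarrow>
        irreducible (bracket_elem f a)"
  proof (intro allI impI)
    fix a :: "nat \<Rightarrow> int"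
    assume a0k: "a 0 * a k \<noteq> 0" and nd: "\<not> int p dvd a 0 * a k"
    define c where "c i = int (\<Prod>{n+i+1..m})" for i
    define H where "H = (\<Sum>i\<le>k. monom (a i * c i) i)"
    have cH: "coeff H i = (if i \<le> k then a i * c i else 0)" for i
      unfolding H_def coeff_sum coeff_monom by (subst sum.delta) auto
    have ck: "c k = 1" unfolding c_def using nk by auto
    have ak: "a k \<noteq> 0" using a0k by auto
    have dH: "degree H = k"
    proof (rule antisym)
      show "degree H \<le> k" by (rule degree_le) (auto simp: cH)
      show "k \<le> degree H" by (rule le_degree) (simp add: cH ck ak)
    qed
    have hom: "of_int_poly H = smult (fact m) (bracket_elem f a)"
    proof (rule poly_eqI)
      fix i
      show "coeff (of_int_poly H) i = coeff (smult (fact m) (bracket_elem f a)) i"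
      proof (cases "i \<le> k")
        case True
        have "n + i \<le> m" using True nk by linarith
        from fact_split_rat[OF this] show ?thesis
          using True by (simp add: coeff_map_poly cH coeff_bracket df cf c_def)
      next
        case False
        then show ?thesis by (simp add: coeff_map_poly cH coeff_bracket df cf)
      qed
    qed
    have pint: "prime (int p)" using p by simp
    have lead: "\<not> int p dvd lead_coeff H" using nd by (simp add: dH cH ck) (meson dvd_mult)
    have low: "\<forall>i<degree H. int p dvd coeff H i"
    proof (intro allI impI)
      fix i assume "i < degree H"
      hence i: "i < k" using dH by simp
      have "m \<in> {n+i+1..m}" using i nk by auto
      hence "m dvd \<Prod>{n+i+1..m}" by (intro dvd_prodI) auto
      hence "p dvd \<Prod>{n+i+1..m}" using pm dvd_trans by blast
      hence "int p dvd c i" unfolding c_def using int_dvd_int_iff by blast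
      thus "int p dvd coeff H i" using i by (simp add: cH)
    qed
    define Q where "Q = \<Prod>{n+1..m-1}"
    have setm: "{n+1..m} = insert m {n+1..m-1}" using k1 nk by auto
    have "m \<notin> {n+1..m-1}" using m0 by auto
    hence pn: "\<Prod>{n+1..m} = m * Q" unfolding Q_def setm by simp
    have c0: "c 0 = int m * int Q" unfolding c_def using pn by (simp del: of_nat_prod)
    have nQ: "\<not> p dvd Q"
    proof
      assume "p dvd Q"
      then obtain t where t: "t \<in> {n+1..m-1}" "p dvd t" unfolding Q_def
        using prime_dvd_prod_iff[OF _ p] by (metis finite_atLeastAtMost)
      have "p dvd m - t" using t(2) pm by (simp add: dvd_diff_nat)
      moreover have "0 < m - t" "m - t < p" using t(1) nk kp by auto
      ultimately show False by (meson dvd_imp_le not_le)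
    qed
    have na0: "\<not> int p dvd a 0" using nd by (meson dvd_mult2)
    have "\<not> int p dvd a 0 * int Q"
      using pint na0 nQ by (metis int_dvd_int_iff prime_dvd_mult_iff)
    hence "algebraic_semidom_class.coprime (int p) (a 0 * int Q)" by (rule prime_imp_coprime[OF pint])
    hence cop: "algebraic_semidom_class.coprime ((int p)^2) (a 0 * int Q)" by simp
    have c0H: "\<not> (int p)^2 dvd coeff H 0"
    proof
      assume "(int p)^2 dvd coeff H 0"
      hence "(int p)^2 dvd (a 0 * int Q) * int m" by (simp add: cH c0 ac_simps)
      hence "(int p)^2 dvd int m" using coprime_dvd_mult_right_iff[OF cop] by simp
      hence "p^2 dvd m" using int_dvd_int_iff[of "p^2" m] by simp
      thus False using sq by simp
    qed
    have irrd: "irreducible\<^sub>d (of_int_poly H :: rat poly)"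
      unfolding irreducible\<^sub>d_def
    proof (intro conjI allI impI)
      show "0 < degree (of_int_poly H :: rat poly)" using dH k1 by simp
      fix q r :: "rat poly"
      assume dq: "degree q < degree (of_int_poly H :: rat poly)" and dr: "degree r < degree (of_int_poly H :: rat poly)"
      show "of_int_poly H \<noteq> q * r"
      proof
        assume eq: "of_int_poly H = q * r"
        from rat_to_int_factor[OF eq] obtain g' h' where gh: "H = g' * h'" "degree g' = degree q" "degree h' = degree r" by blast
        have H0: "H \<noteq> 0" using dH k1 by auto
        hence "degree H = degree g' + degree h'" using gh(1) degree_mult_eq by (metis mult_zero_left mult_zero_right)
        moreover have "degree g' = 0 \<or> degree h' = 0" using eisenstein[OF pint gh(1) lead low c0H] .
        ultimately show False using dq dr gh by simp
      qed
    qed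
    hence "irreducible (of_int_poly H :: rat poly)" using irreducible_connect_field by blast
    hence "irreducible (smult (fact m) (bracket_elem f a))" using hom by simp
    thus "irreducible (bracket_elem f a)" by simp
  qed
  thus ?thesis unfolding event_A_def using km df f_def n_def by simp
qed



lemma multiples_eq:
  fixes d x :: nat
  assumes "d > 0"
  shows "{m\<in>{1..x}. d dvd m} = (\<lambda>i. d * i) ` {1..x div d}"
proof (intro equalityI subsetI)
  fix m assume "m \<in> {m\<in>{1..x}. d dvd m}"
  then obtain i where m: "m = d * i" "1 \<le> m" "m \<le> x" by auto
  have "i \<noteq> 0" using m by auto
  hence "1 \<le> i" by simp
  moreover have "i \<le> x div d" using m assms by (metis div_le_mono nonzero_mult_div_cancel_left not_gr0)
  ultimately show "m \<in> (\<lambda>i. d * i) ` {1..x div d}" using m by auto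
next
  fix m assume "m \<in> (\<lambda>i. d * i) ` {1..x div d}"
  then obtain i where i0: "i \<in> {1..x div d}" "m = d * i" by blast
  hence i: "m = d * i" "1 \<le> i" "i \<le> x div d" by auto
  have "d * i \<le> d * (x div d)" using i by simp
  also have "\<dots> \<le> x" by simp
  finally show "m \<in> {m\<in>{1..x}. d dvd m}" using i assms by auto
qed

lemma card_multiples:
  fixes d x :: nat
  assumes "d > 0"
  shows "card {m\<in>{1..x}. d dvd m} = x div d"
  unfolding multiples_eq[OF assms] using assms by (subst card_image) (auto simp: inj_on_def)

lemma card_multiples_le:
  fixes d x :: nat
  assumes "d > 0"
  shows "real (card {m\<in>{1..x}. d dvd m}) \<le> real x / real d"
proof -
  have "real (x div d) * real d \<le> real x"
    by (metis div_times_less_eq_dividend of_nat_le_iff of_nat_mult)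
  thus ?thesis using card_multiples[OF assms] assms by (simp add: pos_le_divide_eq)
qed

lemma ln_sum_mangoldt:
  fixes x :: nat
  assumes S: "S \<subseteq> {1..x}"
  shows "(\<Sum>m\<in>S. ln (real m)) = (\<Sum>d\<in>{1..x}. mangoldt d * real (card {m\<in>S. d dvd m}))"
proof -
  have fS: "finite S" using S finite_subset by blast
  have "(\<Sum>m\<in>S. ln (real m)) = (\<Sum>m\<in>S. \<Sum>d\<in>{1..x}. if d dvd m then mangoldt d else 0)"
  proof (intro sum.cong refl)
    fix m assume m: "m \<in> S"
    hence m1: "m > 0" "m \<le> x" using S by auto
    have "ln (real m) = (\<Sum>d | d dvd m. mangoldt d)" using mangoldt_sum[of m, where 'a=real] m1(1) by simp
    also have "{d. d dvd m} = {d\<in>{1..x}. d dvd m}" using m1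
      by (auto intro: dvd_imp_le dest: dvd_imp_le simp: dvd_pos_nat Suc_le_eq)
    also have "(\<Sum>d\<in>\<dots>. mangoldt d) = (\<Sum>d\<in>{1..x}. if d dvd m then mangoldt d else 0)"
      by (rule sum.inter_filter) simp
    finally show "ln (real m) = (\<Sum>d\<in>{1..x}. if d dvd m then mangoldt d else 0)" .
  qed
  also have "\<dots> = (\<Sum>d\<in>{1..x}. \<Sum>m\<in>S. if d dvd m then mangoldt d else 0)"
    by (rule sum.swap)
  also have "\<dots> = (\<Sum>d\<in>{1..x}. mangoldt d * real (card {m\<in>S. d dvd m}))"
  proof (intro sum.cong refl)
    fix d
    have "(\<Sum>m\<in>S. if d dvd m then mangoldt d else 0) = (\<Sum>m\<in>{m\<in>S. d dvd m}. mangoldt d)"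
      by (rule sum.inter_filter[symmetric]) (rule fS)
    also have "\<dots> = mangoldt d * real (card {m\<in>S. d dvd m})" by simp
    finally show "(\<Sum>m\<in>S. if d dvd m then mangoldt d else 0) = mangoldt d * real (card {m\<in>S. d dvd m})" .
  qed
  finally show ?thesis .
qed

lemma pow_le_exp_fact: "real n ^ n \<le> exp (real n) * fact n"
proof (induction n)
  case 0 then show ?case by simp
next
  case (Suc n)
  have key: "(real n + 1) ^ n \<le> exp 1 * real n ^ n"
  proof (cases "n = 0")
    case True then show ?thesis by simp
  next
    case False
    hence np: "real n > 0" by simp
    have "real n + 1 = real n * (1 + 1 / real n)" using np by (simp add: field_simps)
    also have "\<dots> \<le> real n * exp (1 / real n)"
      using np by (intro mult_left_mono) (auto simp: exp_ge_add_one_self)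
    finally have "(real n + 1) ^ n \<le> (real n * exp (1 / real n)) ^ n"
      by (intro power_mono) auto
    also have "\<dots> = real n ^ n * exp (1 / real n) ^ n" by (simp add: power_mult_distrib)
    also have "exp (1 / real n) ^ n = exp 1" using np by (simp add: exp_of_nat_mult[symmetric])
    finally show ?thesis by (simp add: mult.commute)
  qed
  have "real (Suc n) ^ Suc n = (real n + 1) * (real n + 1) ^ n" by (simp add: add.commute)
  also have "\<dots> \<le> (real n + 1) * (exp 1 * real n ^ n)" by (intro mult_left_mono key) auto
  also have "\<dots> \<le> (real n + 1) * (exp 1 * (exp (real n) * fact n))"
    by (intro mult_left_mono Suc.IH) auto
  also have "\<dots> = exp (real (Suc n)) * fact (Suc n)" by (simp add: exp_add field_simps)
  finally show ?case .
qed

lemma ln_fact_sum: "ln (fact n :: real) = (\<Sum>m\<in>{1..n}. ln (real m))"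
proof -
  have "ln (fact n :: real) = ln (\<Prod>m\<in>{1..n}. real m)" by (simp add: fact_prod)
  also have "\<dots> = (\<Sum>m\<in>{1..n}. ln (real m))" by (rule ln_prod) auto
  finally show ?thesis .
qed

lemma sum_ln_ratio: "(\<Sum>m\<in>{1..x}. ln (real x / real m)) \<le> real x"
proof (cases "x = 0")
  case True then show ?thesis by simp
next
  case False
  have "(\<Sum>m\<in>{1..x}. ln (real x / real m)) = (\<Sum>m\<in>{1..x}. ln (real x) - ln (real m))"
    using False by (intro sum.cong refl) (auto simp: ln_div)
  also have "\<dots> = real x * ln (real x) - ln (fact x)" by (simp add: sum_subtractf ln_fact_sum)
  also have "real x * ln (real x) = ln (real x ^ x)" using False by (simp add: ln_realpow)
  also have "ln (real x ^ x) \<le> ln (exp (real x) * fact x)"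
    using False pow_le_exp_fact[of x] by (subst ln_le_cancel_iff) auto
  also have "\<dots> = real x + ln (fact x)" by (simp add: ln_mult)
  finally show ?thesis by simp
qed

lemma div_double_bound:
  fixes p y :: nat
  assumes "0 < p" "p \<le> y"
  shows "y \<le> 2 * (y div p) * p"
proof -
  have q: "y div p \<ge> 1" using div_le_mono[OF assms(2), of p] assms(1) by simp
  have "p \<le> y div p * p" using q by simp
  moreover have "y = y div p * p + y mod p" by simp
  moreover have "y mod p < p" using assms by simp
  ultimately show ?thesis by linarith
qed

lemma mertens_weak:
  fixes y :: nat
  assumes y: "y \<ge> 1"
  shows "(\<Sum>p\<in>{p\<in>{1..y}. prime p}. ln (real p) / real p) \<le> 2 * ln (real y)"
proof -
  define P where "P = {p\<in>{1..y}. prime p}"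
  have "(\<Sum>m\<in>{1..y}. ln (real m)) \<le> (\<Sum>m\<in>{1..y}. ln (real y))"
    by (intro sum_mono) auto
  also have "\<dots> = real y * ln (real y)" by simp
  finally have up: "(\<Sum>m\<in>{1..y}. ln (real m)) \<le> real y * ln (real y)" .
  have eq: "(\<Sum>m\<in>{1..y}. ln (real m)) = (\<Sum>d\<in>{1..y}. mangoldt d * real (card {m\<in>{1..y}. d dvd m}))"
    by (rule ln_sum_mangoldt) simp
  have "(\<Sum>p\<in>P. mangoldt p * real (card {m\<in>{1..y}. p dvd m})) \<le> (\<Sum>d\<in>{1..y}. mangoldt d * real (card {m\<in>{1..y}. d dvd m}))"
    by (rule sum_mono2) (auto simp: P_def mangoldt_nonneg)
  moreover have "(\<Sum>p\<in>P. mangoldt p * real (card {m\<in>{1..y}. p dvd m})) = (\<Sum>p\<in>P. ln (real p) * real (y div p))"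
  proof (intro sum.cong refl)
    fix p assume "p \<in> P"
    hence "prime p" by (simp add: P_def)
    hence "card {m\<in>{1..y}. p dvd m} = y div p" by (intro card_multiples) (simp add: prime_gt_0_nat)
    thus "mangoldt p * real (card {m\<in>{1..y}. p dvd m}) = ln (real p) * real (y div p)"
      using \<open>prime p\<close> by simp
  qed
  moreover have "(\<Sum>p\<in>P. ln (real p) * (real y / (2 * real p))) \<le> (\<Sum>p\<in>P. ln (real p) * real (y div p))"
  proof (intro sum_mono)
    fix p assume p: "p \<in> P"
    hence p0: "0 < p" "p \<le> y" and pp: "prime p" by (auto simp: P_def prime_gt_0_nat)
    have "real y \<le> real (2 * (y div p) * p)"
      using div_double_bound[OF p0] by (simp only: of_nat_le_iff)
    hence "real y \<le> 2 * real (y div p) * real p" by simp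
    hence "real y / (2 * real p) \<le> real (y div p)" using p0 by (simp add: divide_le_eq)
    moreover have "ln (real p) \<ge> 0" using p0 by simp
    ultimately show "ln (real p) * (real y / (2 * real p)) \<le> ln (real p) * real (y div p)"
      by (intro mult_left_mono) auto
  qed
  moreover have "(\<Sum>p\<in>P. ln (real p) * (real y / (2 * real p))) = real y / 2 * (\<Sum>p\<in>P. ln (real p) / real p)"
    by (simp add: sum_distrib_left field_simps)
  ultimately have "real y / 2 * (\<Sum>p\<in>P. ln (real p) / real p) \<le> real y * ln (real y)"
    using up eq by linarith
  thus ?thesis using y unfolding P_def by (simp add: field_simps)
qed

lemma geo_aux:
  fixes r :: real
  assumes "0 \<le> r" "r \<le> 1/2"
  shows "(\<Sum>j\<in>{1..n}. r ^ j) \<le> 2 * r - 2 * r ^ Suc n"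
proof (induction n)
  case 0 then show ?case by simp
next
  case (Suc n)
  have "(\<Sum>j\<in>{1..Suc n}. r ^ j) = (\<Sum>j\<in>{1..n}. r ^ j) + r ^ Suc n" by simp
  also have "\<dots> \<le> 2 * r - 2 * r ^ Suc n + r ^ Suc n" using Suc.IH by simp
  also have "\<dots> \<le> 2 * r - 2 * r ^ Suc (Suc n)"
  proof -
    have "2 * r ^ Suc (Suc n) = (2 * r) * r ^ Suc n" by simp
    also have "\<dots> \<le> 1 * r ^ Suc n" using assms by (intro mult_right_mono) auto
    finally have "2 * r ^ Suc (Suc n) \<le> r ^ Suc n" by simp
    thus ?thesis by simp
  qed
  finally show ?case .
qed

lemma geo_bound:
  fixes p :: nat
  assumes "p \<ge> 2"
  shows "(\<Sum>j\<in>{1..n}. 1 / real p ^ j) \<le> 2 / real p"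
proof -
  have "(\<Sum>j\<in>{1..n}. 1 / real p ^ j) = (\<Sum>j\<in>{1..n}. (1 / real p) ^ j)" by (simp add: power_one_over)
  also have "\<dots> \<le> 2 * (1 / real p) - 2 * (1 / real p) ^ Suc n"
    using assms by (intro geo_aux) auto
  also have "\<dots> \<le> 2 / real p" using assms by simp
  finally show ?thesis .
qed

definition smooth_set :: "nat \<Rightarrow> nat \<Rightarrow> nat set" where
  "smooth_set x y = {m\<in>{1..x}. \<forall>q. prime q \<longrightarrow> q dvd m \<longrightarrow> q \<le> y}"

lemma smooth_log_sum:
  fixes x y :: nat
  assumes y: "y \<ge> 1"
  shows "(\<Sum>m\<in>smooth_set x y. ln (real m)) \<le> real x * (4 * ln (real y))"
proof -
  define D where "D = {d\<in>{1..x}. primepow d \<and> aprimedivisor d \<le> y}"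
  define g where "g d = ln (real (aprimedivisor d)) / real d" for d
  define P where "P = {p\<in>{1..y}. prime p}"
  have Ssub: "smooth_set x y \<subseteq> {1..x}" by (auto simp: smooth_set_def)
  have "(\<Sum>m\<in>smooth_set x y. ln (real m)) = (\<Sum>d\<in>{1..x}. mangoldt d * real (card {m\<in>smooth_set x y. d dvd m}))"
    by (rule ln_sum_mangoldt[OF Ssub])
  also have "\<dots> \<le> (\<Sum>d\<in>{1..x}. if d \<in> D then real x * g d else 0)"
  proof (intro sum_mono)
    fix d assume d: "d \<in> {1..x}"
    show "mangoldt d * real (card {m\<in>smooth_set x y. d dvd m}) \<le> (if d \<in> D then real x * g d else 0)"
    proof (cases "primepow d")
      case False
      then show ?thesis by (simp add: mangoldt_def D_def)
    next
      case True
      have d1: "d > 1" using primepow_gt_Suc_0[OF True] by simp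
      have pa: "prime (aprimedivisor d)" using d1 by (intro prime_aprimedivisor') auto
      have ad: "aprimedivisor d dvd d" using d1 by (intro aprimedivisor_dvd') auto
      have md: "mangoldt d = ln (real (aprimedivisor d))" using True by (simp add: mangoldt_def)
      show ?thesis
      proof (cases "aprimedivisor d \<le> y")
        case False
        have "{m\<in>smooth_set x y. d dvd m} = {}"
        proof (intro equalityI subsetI)
          fix m assume "m \<in> {m\<in>smooth_set x y. d dvd m}"
          hence "aprimedivisor d \<le> y" using pa ad unfolding smooth_set_def by (auto dest: dvd_trans)
          thus "m \<in> {}" using False by simp
        qed simp
        hence c0: "card {m\<in>smooth_set x y. d dvd m} = 0" by (simp only: card.empty)
        show ?thesis using False by (simp add: D_def c0)
      next
        case True2: True
        have dD: "d \<in> D" using d True True2 by (simp add: D_def)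
        have "card {m\<in>smooth_set x y. d dvd m} \<le> card {m\<in>{1..x}. d dvd m}"
          by (intro card_mono) (auto simp: smooth_set_def)
        hence "real (card {m\<in>smooth_set x y. d dvd m}) \<le> real (card {m\<in>{1..x}. d dvd m})"
          by (simp only: of_nat_le_iff)
        also have "\<dots> \<le> real x / real d" using d by (intro card_multiples_le) auto
        finally have "real (card {m\<in>smooth_set x y. d dvd m}) \<le> real x / real d" .
        moreover have "0 \<le> ln (real (aprimedivisor d))"
        proof -
          have "1 \<le> aprimedivisor d" using pa prime_ge_1_nat by blast
          thus ?thesis by simp
        qed
        ultimately have "mangoldt d * real (card {m\<in>smooth_set x y. d dvd m}) \<le> ln (real (aprimedivisor d)) * (real x / real d)"
          unfolding md by (intro mult_left_mono) auto
        then show ?thesis using dD by (simp add: g_def mult.commute)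
      qed
    qed
  qed
  also have "\<dots> = (\<Sum>d\<in>D. real x * g d)"
  proof -
    have DD: "{1..x} \<inter> D = D" by (auto simp: D_def)
    have "(\<Sum>d\<in>{1..x} \<inter> D. real x * g d) = (\<Sum>d\<in>{1..x}. if d \<in> D then real x * g d else 0)"
      by (rule sum.inter_restrict) simp
    thus ?thesis using DD by simp
  qed
  also have "\<dots> = real x * (\<Sum>d\<in>D. g d)" by (simp add: sum_distrib_left)
  also have "(\<Sum>d\<in>D. g d) \<le> 4 * ln (real y)"
  proof -
    define h where "h z = fst z ^ snd z" for z :: "nat \<times> nat"
    have Dsub: "D \<subseteq> h ` (P \<times> {1..x})"
    proof
      fix d assume dD: "d \<in> D"
      then obtain p k where pk: "prime p" "k > 0" "d = p ^ k" unfolding D_def primepow_def by blast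
      have ap: "aprimedivisor d = p" using pk by (simp add: aprimedivisor_prime_power)
      have "k < 2 ^ k" by (rule less_exp)
      also have "2 ^ k \<le> p ^ k" using pk by (intro power_mono) (auto simp: prime_ge_2_nat)
      also have "p ^ k \<le> x" using dD pk by (simp add: D_def)
      finally have "k \<le> x" by simp
      moreover have "p \<in> P" using dD pk ap by (auto simp: D_def P_def Suc_le_eq prime_gt_0_nat)
      ultimately show "d \<in> h ` (P \<times> {1..x})" using pk
        by (intro image_eqI[of _ _ "(p,k)"]) (auto simp: h_def)
    qed
    have fin: "finite (P \<times> {1..x})" by (simp add: P_def)
    have gpos: "\<forall>z\<in>P \<times> {1..x}. 0 \<le> g (h z)"
    proof
      fix z assume z: "z \<in> P \<times> {1..x}"
      hence "aprimedivisor (h z) = fst z" using z by (auto simp: h_def P_def aprimedivisor_prime_power)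
      moreover have "1 \<le> fst z" using z by (auto simp: P_def)
      ultimately show "0 \<le> g (h z)" by (simp add: g_def)
    qed
    have "(\<Sum>d\<in>D. g d) \<le> (\<Sum>d\<in>h ` (P \<times> {1..x}). g d)"
      using Dsub fin gpos by (intro sum_mono2) auto
    also have "\<dots> \<le> (\<Sum>z\<in>P \<times> {1..x}. g (h z))"
      using sum_image_le[OF fin, of g h] gpos by (simp add: o_def)
    also have "\<dots> = (\<Sum>z\<in>P \<times> {1..x}. ln (real (fst z)) * (1 / real (fst z) ^ snd z))"
      by (intro sum.cong refl) (auto simp: g_def h_def P_def aprimedivisor_prime_power)
    also have "\<dots> = (\<Sum>p\<in>P. \<Sum>j\<in>{1..x}. ln (real p) * (1 / real p ^ j))"
      by (simp add: sum.cartesian_product split_beta)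
    also have "\<dots> = (\<Sum>p\<in>P. ln (real p) * (\<Sum>j\<in>{1..x}. 1 / real p ^ j))"
      by (simp add: sum_distrib_left)
    also have "\<dots> \<le> (\<Sum>p\<in>P. ln (real p) * (2 / real p))"
    proof (intro sum_mono mult_left_mono)
      fix p assume "p \<in> P"
      hence p2: "p \<ge> 2" by (simp add: P_def prime_ge_2_nat)
      show "(\<Sum>j\<in>{1..x}. 1 / real p ^ j) \<le> 2 / real p" by (rule geo_bound[OF p2])
      show "0 \<le> ln (real p)" using p2 by simp
    qed
    also have "\<dots> = 2 * (\<Sum>p\<in>P. ln (real p) / real p)" by (simp add: sum_distrib_left mult.commute)
    also have "\<dots> \<le> 2 * (2 * ln (real y))" using mertens_weak[OF y] unfolding P_def by simp
    finally show ?thesis by simp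
  qed
  hence "real x * (\<Sum>d\<in>D. g d) \<le> real x * (4 * ln (real y))" by (intro mult_left_mono) auto
  finally show ?thesis .
qed

lemma smooth_card:
  fixes x y :: nat
  assumes y: "y \<ge> 1" and x: "x \<ge> 1"
  shows "real (card (smooth_set x y)) * ln (real x) \<le> real x * (4 * ln (real y) + 1)"
proof -
  have Ssub: "smooth_set x y \<subseteq> {1..x}" by (auto simp: smooth_set_def)
  have "real (card (smooth_set x y)) * ln (real x) = (\<Sum>m\<in>smooth_set x y. ln (real x))" by simp
  also have "\<dots> = (\<Sum>m\<in>smooth_set x y. ln (real m) + ln (real x / real m))"
    using Ssub by (intro sum.cong refl) (auto simp: ln_div)
  also have "\<dots> = (\<Sum>m\<in>smooth_set x y. ln (real m)) + (\<Sum>m\<in>smooth_set x y. ln (real x / real m))"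
    by (simp add: sum.distrib)
  also have "(\<Sum>m\<in>smooth_set x y. ln (real x / real m)) \<le> (\<Sum>m\<in>{1..x}. ln (real x / real m))"
    using Ssub by (intro sum_mono2) auto
  also have "\<dots> \<le> real x" by (rule sum_ln_ratio)
  finally show ?thesis using smooth_log_sum[OF y, of x] by (simp add: algebra_simps)
qed

lemma inv_sq_aux:
  fixes y :: nat
  assumes "y \<ge> 1"
  shows "(\<Sum>d\<in>{y+1..y+n}. 1 / real d ^ 2) \<le> 1 / real y - 1 / real (y + n)"
proof (induction n)
  case 0 then show ?case by simp
next
  case (Suc n)
  define a where "a = real (y + n)"
  have a1: "a \<ge> 1" using assms by (simp add: a_def)
  have "(\<Sum>d\<in>{y+1..y+Suc n}. 1 / real d ^ 2) = (\<Sum>d\<in>{y+1..y+n}. 1 / real d ^ 2) + 1 / (a + 1) ^ 2"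
    by (simp add: a_def add.commute)
  also have "\<dots> \<le> 1 / real y - a' + 1 / (a+1)^2" if "a' = 1 / a" for a'
    using Suc.IH that by (simp add: a_def)
  have "1 / (a + 1) ^ 2 \<le> 1 / a - 1 / (a + 1)"
  proof -
    have "1 / a - 1 / (a + 1) = 1 / (a * (a + 1))" using a1 by (simp add: field_simps)
    moreover have "a * (a + 1) \<le> (a + 1) ^ 2" using a1 by (simp add: power2_eq_square)
    moreover have "0 < a * (a + 1)" using a1 by simp
    ultimately show ?thesis by (simp add: frac_le)
  qed
  hence "(\<Sum>d\<in>{y+1..y+n}. 1 / real d ^ 2) + 1 / (a + 1) ^ 2 \<le> 1 / real y - 1 / (a + 1)"
    using Suc.IH by (simp add: a_def)
  ultimately show ?case by (simp add: a_def add.commute)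
qed

lemma inv_sq_sum:
  fixes x y :: nat
  assumes "y \<ge> 1"
  shows "(\<Sum>d\<in>{y+1..x}. 1 / real d ^ 2) \<le> 1 / real y"
proof (cases "x \<le> y")
  case True then show ?thesis by simp
next
  case False
  then obtain n where n: "x = y + n" by (metis le_add_diff_inverse nat_le_linear)
  have "0 \<le> 1 / real (y + n)" by simp
  thus ?thesis unfolding n using inv_sq_aux[OF assms, of n] by linarith
qed

lemma sq_card:
  fixes x y :: nat
  assumes y: "y \<ge> 1"
  shows "real (card {m\<in>{1..x}. \<exists>d\<in>{y+1..x}. d^2 dvd m}) \<le> real x / real y"
proof -
  have eq: "{m\<in>{1..x}. \<exists>d\<in>{y+1..x}. d^2 dvd m} = (\<Union>d\<in>{y+1..x}. {m\<in>{1..x}. d^2 dvd m})" by auto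
  have "card {m\<in>{1..x}. \<exists>d\<in>{y+1..x}. d^2 dvd m} \<le> (\<Sum>d\<in>{y+1..x}. card {m\<in>{1..x}. d^2 dvd m})"
    unfolding eq by (rule card_UN_le) simp
  hence "real (card {m\<in>{1..x}. \<exists>d\<in>{y+1..x}. d^2 dvd m}) \<le> real (\<Sum>d\<in>{y+1..x}. card {m\<in>{1..x}. d^2 dvd m})"
    by (simp only: of_nat_le_iff)
  also have "\<dots> = (\<Sum>d\<in>{y+1..x}. real (card {m\<in>{1..x}. d^2 dvd m}))" by (rule of_nat_sum)
  also have "\<dots> \<le> (\<Sum>d\<in>{y+1..x}. real x * (1 / real d ^ 2))"
  proof (intro sum_mono)
    fix d assume "d \<in> {y+1..x}"
    hence "d^2 > 0" by simp
    from card_multiples_le[OF this, of x] show "real (card {m\<in>{1..x}. d^2 dvd m}) \<le> real x * (1 / real d ^ 2)" by simp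
  qed
  also have "\<dots> = real x * (\<Sum>d\<in>{y+1..x}. 1 / real d ^ 2)" by (simp add: sum_distrib_left)
  also have "\<dots> \<le> real x * (1 / real y)" by (intro mult_left_mono inv_sq_sum y) simp
  finally show ?thesis by simp
qed


theorem proposition3:
  fixes kmax :: "nat \<Rightarrow> nat"
  assumes pos: "\<And>x. kmax x > 0"
    and growth: "((\<lambda>x. ln (real (kmax x)) / ln (real x)) \<longlongrightarrow> 0) at_top"
  shows "((\<lambda>x. real (card {m \<in> {1..x}. \<exists>p. prime p \<and> p > kmax x \<and>
                  (\<forall>k\<in>{1..kmax x}. event_A k p m)}) / real x) \<longlongrightarrow> 1) at_top"
proof -
  define G where "G x = {m \<in> {1..x}. \<exists>p. prime p \<and> p > kmax x \<and>
                  (\<forall>k\<in>{1..kmax x}. event_A k p m)}" for x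
  define L where "L x = 1 - 4 * (ln (real (kmax x)) / ln (real x)) - (2 + 4 * ln (ln (real x) + 1)) / ln (real x)" for x :: nat
  have "((\<lambda>t::real. (2 + 4 * ln (ln t + 1)) / ln t) \<longlongrightarrow> 0) at_top" by real_asymp
  from filterlim_compose[OF this filterlim_real_sequentially]
  have lim0: "((\<lambda>x::nat. (2 + 4 * ln (ln (real x) + 1)) / ln (real x)) \<longlongrightarrow> 0) at_top" by simp
  have "((\<lambda>x. 1 - 4 * (ln (real (kmax x)) / ln (real x)) - (2 + 4 * ln (ln (real x) + 1)) / ln (real x)) \<longlongrightarrow> 1 - 4 * 0 - 0) at_top"
    by (intro tendsto_intros growth lim0)
  hence limL: "(L \<longlongrightarrow> 1) at_top" by (simp add: L_def[abs_def])
  have ev: "eventually (\<lambda>x. L x \<le> real (card (G x)) / real x) at_top"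
    unfolding eventually_at_top_linorder
  proof (intro exI[of _ 4] allI impI)
    fix x :: nat assume x3: "4 \<le> x"
    define K where "K = kmax x"
    define a where "a = ln (real x)"
    define Z where "Z = nat \<lfloor>a\<rfloor> + 1"
    define Yv where "Yv = K * Z"
    have K1: "K \<ge> 1" using pos[of x] by (simp add: K_def)
    have "exp 1 < real x" using x3 exp_le by linarith
    hence "ln (exp 1) < ln (real x)" using x3 by (subst ln_less_cancel_iff) auto
    hence a1: "a > 1" unfolding a_def by simp
    have fl: "real_of_int \<lfloor>a\<rfloor> \<le> a" "a < real_of_int \<lfloor>a\<rfloor> + 1" by linarith+
    have fl0: "\<lfloor>a\<rfloor> \<ge> 0" using a1 by simp
    have rZ: "real Z = real_of_int \<lfloor>a\<rfloor> + 1" unfolding Z_def using fl0 by simp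
    have Z1: "Z \<ge> 1" by (simp add: Z_def)
    have Za: "a < real Z" "real Z \<le> a + 1" using rZ fl by linarith+
    have Y1: "Yv \<ge> 1" using K1 Z1 by (simp add: Yv_def)
    have YK: "K \<le> Yv" using Z1 by (simp add: Yv_def)
    have "1 * Z \<le> K * Z" using K1 by (intro mult_right_mono) auto
    hence YZ: "real Z \<le> real Yv" unfolding Yv_def by (simp only: mult_1 of_nat_le_iff)
    define Gd where "Gd = {m\<in>{1..x}. \<exists>p. prime p \<and> K < p \<and> p dvd m \<and> \<not> p^2 dvd m}"
    define Sq where "Sq = {m\<in>{1..x}. \<exists>d\<in>{Yv+1..x}. d^2 dvd m}"
    define Sm where "Sm = smooth_set x Yv"
    have GdG: "Gd \<subseteq> G x"
    proof
      fix m assume "m \<in> Gd"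
      then obtain p where m: "m \<in> {1..x}" "prime p" "K < p" "p dvd m" "\<not> p^2 dvd m"
        unfolding Gd_def by blast
      have "\<forall>k\<in>{1..kmax x}. event_A k p m"
      proof
        fix k assume "k \<in> {1..kmax x}"
        hence "1 \<le> k" "k < p" using m(3) by (auto simp: K_def)
        thus "event_A k p m" using event_A_of[OF m(2) m(4) m(5)] by blast
      qed
      thus "m \<in> G x" using m by (auto simp: G_def K_def)
    qed
    have cover: "{1..x} \<subseteq> Gd \<union> Sq \<union> Sm"
    proof
      fix m assume m: "m \<in> {1..x}"
      show "m \<in> Gd \<union> Sq \<union> Sm"
      proof (cases "m \<in> Sm")
        case True then show ?thesis by simp
      next
        case False
        then obtain q where q: "prime q" "q dvd m" "\<not> q \<le> Yv"
          using m unfolding Sm_def smooth_set_def by blast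
        have qx: "q \<le> x" using q(2) m by (auto dest: dvd_imp_le)
        show ?thesis
        proof (cases "q^2 dvd m")
          case True
          have "q \<in> {Yv+1..x}" using q(3) qx by auto
          hence "m \<in> Sq" using True m unfolding Sq_def by blast
          then show ?thesis by simp
        next
          case False
          have "K < q" using q(3) YK by linarith
          hence "m \<in> Gd" using q(1,2) False m unfolding Gd_def by blast
          then show ?thesis by simp
        qed
      qed
    qed
    have fins: "finite Gd" "finite Sq" "finite Sm"
      by (auto simp: Gd_def Sq_def Sm_def smooth_set_def)
    have "x = card {1..x}" by simp
    also have "\<dots> \<le> card (Gd \<union> Sq \<union> Sm)" using fins by (intro card_mono cover) auto
    also have "\<dots> \<le> card (Gd \<union> Sq) + card Sm" by (rule card_Un_le)
    also have "\<dots> \<le> card Gd + card Sq + card Sm" using card_Un_le[of Gd Sq] by linarith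
    also have "card Gd \<le> card (G x)" by (intro card_mono GdG) (simp add: G_def)
    finally have cx: "real x \<le> real (card (G x)) + real (card Sq) + real (card Sm)" by linarith
    have "real (card Sq) \<le> real x / real Yv" unfolding Sq_def by (rule sq_card[OF Y1])
    also have "\<dots> \<le> real x / a" using a1 Za YZ by (intro divide_left_mono) auto
    finally have h1: "real (card Sq) \<le> real x / a" .
    have lnY: "ln (real Yv) \<le> ln (real K) + ln (a + 1)"
    proof -
      have "ln (real Yv) = ln (real K) + ln (real Z)" using K1 Z1 by (simp add: Yv_def ln_mult)
      moreover have "ln (real Z) \<le> ln (a + 1)" using Za Z1 by simp
      ultimately show ?thesis by simp
    qed
    have "real (card Sm) * a \<le> real x * (4 * ln (real Yv) + 1)"
      unfolding Sm_def a_def using smooth_card[OF Y1, of x] x3 by simp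
    also have "\<dots> \<le> real x * (4 * ln (real K) + 4 * ln (a + 1) + 1)"
      using lnY by (intro mult_left_mono) auto
    finally have h2: "real (card Sm) \<le> real x * (4 * ln (real K) + 4 * ln (a + 1) + 1) / a"
      using a1 by (simp add: pos_le_divide_eq)
    have xL: "real x * L x = real x - real x / a - real x * (4 * ln (real K) + 4 * ln (a + 1) + 1) / a"
      using a1 by (simp add: L_def K_def a_def field_simps)
    have "real x * L x \<le> real (card (G x))" using xL cx h1 h2 by linarith
    thus "L x \<le> real (card (G x)) / real x" using x3 by (simp add: pos_le_divide_eq mult.commute)
  qed
  have ev2: "eventually (\<lambda>x. real (card (G x)) / real x \<le> 1) at_top"
    unfolding eventually_at_top_linorder
  proof (intro exI[of _ 1] allI impI)
    fix x :: nat assume "1 \<le> x"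
    have "card (G x) \<le> card {1..x}" by (intro card_mono) (auto simp: G_def)
    thus "real (card (G x)) / real x \<le> 1" using \<open>1 \<le> x\<close> by simp
  qed
  have "((\<lambda>x. real (card (G x)) / real x) \<longlongrightarrow> 1) at_top"
    by (rule tendsto_sandwich[OF ev ev2 limL tendsto_const])
  thus ?thesis by (simp add: G_def)
qed

end
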